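(* Let $K$ be a connected CW complex, $f:K\to K$ a pointed cellular map with $f\circ f\simeq f$, and $H:K\times I\to K$ a (not necessarily pointed) homotopy from $f$ to $f^2$. Let $d:K\to\mathrm{Tel}(f)$ and $u:\mathrm{Tel}(f)\to K$ be the maps described in the context. Then for every finite CW complex $L$ and every map $h:L\to\mathrm{Tel}(f)$, the map $d\circ u\circ h$ is homotopic to $h$.
   Context: $\mathrm{Tel}(f)$ is the union over $n\in\mathbb{Z}$ of the unreduced mapping cylinders $M_n$ of $f:K_n\to K_{n+1}$, each $K_n$ a copy of $K$, glued along the $K_{n+1}$. The map $d:K\to\mathrm{Tel}(f)$ is $f$ regarded as a map into the copy $K_0$; $u:\mathrm{Tel}(f)\to K$ equals $f$ on each copy $K_n$ and equals $H(x,t)$ at the point $(x,t)$ of $M_n$. Homotopies are free. *)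

theory Defs
  imports "HOL-Analysis.Analysis"
begin

text \<open>The closed n-disc, its boundary sphere (empty for n = 0) and its interior,
  inside the library's Euclidean_space n (functions nat => real vanishing from n on).\<close>

definition disc :: "nat \<Rightarrow> (nat \<Rightarrow> real) topology" where
  "disc n = subtopology (Euclidean_space n) {x. (\<Sum>i<n. (x i)^2) \<le> 1}"

definition disc_boundary :: "nat \<Rightarrow> (nat \<Rightarrow> real) set" where
  "disc_boundary n = {x \<in> topspace (Euclidean_space n). (\<Sum>i<n. (x i)^2) = 1}"

definition disc_interior :: "nat \<Rightarrow> (nat \<Rightarrow> real) set" where
  "disc_interior n = {x \<in> topspace (Euclidean_space n). (\<Sum>i<n. (x i)^2) < 1}"

definition open_cell :: "('i \<Rightarrow> nat) \<Rightarrow> ('i \<Rightarrow> (nat \<Rightarrow> real) \<Rightarrow> 'a) \<Rightarrow> 'i \<Rightarrow> 'a set" where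
  "open_cell cdim \<Phi> i = \<Phi> i ` disc_interior (cdim i)"

definition closed_cell :: "('i \<Rightarrow> nat) \<Rightarrow> ('i \<Rightarrow> (nat \<Rightarrow> real) \<Rightarrow> 'a) \<Rightarrow> 'i \<Rightarrow> 'a set" where
  "closed_cell cdim \<Phi> i = \<Phi> i ` topspace (disc (cdim i))"

definition cw_structure ::
  "'a topology \<Rightarrow> 'i set \<Rightarrow> ('i \<Rightarrow> nat) \<Rightarrow> ('i \<Rightarrow> (nat \<Rightarrow> real) \<Rightarrow> 'a) \<Rightarrow> bool" where
  "cw_structure X I cdim \<Phi> \<longleftrightarrow>
     Hausdorff_space X \<and>
     (\<forall>i\<in>I. continuous_map (disc (cdim i)) X (\<Phi> i)) \<and>
     (\<forall>i\<in>I. homeomorphic_map (subtopology (disc (cdim i)) (disc_interior (cdim i)))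
                               (subtopology X (open_cell cdim \<Phi> i)) (\<Phi> i)) \<and>
     (\<forall>i\<in>I. \<forall>j\<in>I. i \<noteq> j \<longrightarrow> open_cell cdim \<Phi> i \<inter> open_cell cdim \<Phi> j = {}) \<and>
     (\<Union>i\<in>I. open_cell cdim \<Phi> i) = topspace X \<and>
     (\<forall>i\<in>I. \<exists>F. F \<subseteq> I \<and> finite F \<and> (\<forall>j\<in>F. cdim j < cdim i) \<and>
                 \<Phi> i ` disc_boundary (cdim i) \<subseteq> (\<Union>j\<in>F. open_cell cdim \<Phi> j)) \<and>
     (\<forall>A. A \<subseteq> topspace X \<longrightarrow>
          (closedin X A \<longleftrightarrow>
           (\<forall>i\<in>I. closedin (disc (cdim i)) {x \<in> topspace (disc (cdim i)). \<Phi> i x \<in> A})))"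

definition skeleton :: "'i set \<Rightarrow> ('i \<Rightarrow> nat) \<Rightarrow> ('i \<Rightarrow> (nat \<Rightarrow> real) \<Rightarrow> 'a) \<Rightarrow> nat \<Rightarrow> 'a set" where
  "skeleton I cdim \<Phi> n = (\<Union>i\<in>{i\<in>I. cdim i \<le> n}. closed_cell cdim \<Phi> i)"

definition cellular_map ::
  "'i set \<Rightarrow> ('i \<Rightarrow> nat) \<Rightarrow> ('i \<Rightarrow> (nat \<Rightarrow> real) \<Rightarrow> 'a) \<Rightarrow> ('a \<Rightarrow> 'a) \<Rightarrow> bool" where
  "cellular_map I cdim \<Phi> f \<longleftrightarrow> (\<forall>n. f ` skeleton I cdim \<Phi> n \<subseteq> skeleton I cdim \<Phi> n)"

text \<open>A finite CW complex: a space admitting a CW structure with finitely many cells.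
  The index type is fixed to nat (no loss, since the index set is finite).\<close>

definition finite_cw_complex :: "'b topology \<Rightarrow> bool" where
  "finite_cw_complex L \<longleftrightarrow>
     (\<exists>(I::nat set) cdim \<Phi>. finite I \<and> cw_structure L I cdim \<Phi>)"

text \<open>Tel(f) is the quotient of Z x K x [0,1] (Z discrete) by (n,x,1) ~ (n+1, f x, 0).
  Each equivalence class has a unique representative (n,x,t) with 0 <= t < 1;
  tel_proj sends a point to that representative.\<close>

definition tel_domain :: "'a topology \<Rightarrow> (int \<times> 'a \<times> real) topology" where
  "tel_domain K = prod_topology (discrete_topology UNIV) (prod_topology K (top_of_set {0..1}))"

definition tel_proj :: "('a \<Rightarrow> 'a) \<Rightarrow> int \<times> 'a \<times> real \<Rightarrow> int \<times> 'a \<times> real" where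
  "tel_proj f p = (case p of (n, x, t) \<Rightarrow> if t = 1 then (n + 1, f x, 0) else (n, x, t))"

definition Tel :: "'a topology \<Rightarrow> ('a \<Rightarrow> 'a) \<Rightarrow> (int \<times> 'a \<times> real) topology" where
  "Tel K f = topology (\<lambda>U. U \<subseteq> tel_proj f ` topspace (tel_domain K) \<and>
                 openin (tel_domain K) {p \<in> topspace (tel_domain K). tel_proj f p \<in> U})"

definition tel_d :: "('a \<Rightarrow> 'a) \<Rightarrow> 'a \<Rightarrow> int \<times> 'a \<times> real" where
  "tel_d f x = (0, f x, 0)"

definition tel_u :: "('a \<times> real \<Rightarrow> 'a) \<Rightarrow> int \<times> 'a \<times> real \<Rightarrow> 'a" where
  "tel_u H p = (case p of (n, x, t) \<Rightarrow> H (x, t))"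

end

theory Submission
  imports Defs
begin

lemma tel_istop: "istopology (\<lambda>U. U \<subseteq> tel_proj f ` topspace (tel_domain K) \<and>
                 openin (tel_domain K) {p \<in> topspace (tel_domain K). tel_proj f p \<in> U})"
  unfolding istopology_def
proof (rule conjI; intro allI impI)
  fix S T :: "(int \<times> 'a \<times> real) set"
  assume "S \<subseteq> tel_proj f ` topspace (tel_domain K) \<and>
           openin (tel_domain K) {p \<in> topspace (tel_domain K). tel_proj f p \<in> S}"
     and "T \<subseteq> tel_proj f ` topspace (tel_domain K) \<and>
           openin (tel_domain K) {p \<in> topspace (tel_domain K). tel_proj f p \<in> T}"
  moreover have "{p \<in> topspace (tel_domain K). tel_proj f p \<in> S \<inter> T} =
     {p \<in> topspace (tel_domain K). tel_proj f p \<in> S} \<inter> {p \<in> topspace (tel_domain K). tel_proj f p \<in> T}"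
    by auto
  ultimately show "S \<inter> T \<subseteq> tel_proj f ` topspace (tel_domain K) \<and>
           openin (tel_domain K) {p \<in> topspace (tel_domain K). tel_proj f p \<in> S \<inter> T}"
    by auto
next
  fix \<K> :: "(int \<times> 'a \<times> real) set set"
  assume H: "\<forall>S\<in>\<K>. S \<subseteq> tel_proj f ` topspace (tel_domain K) \<and>
           openin (tel_domain K) {p \<in> topspace (tel_domain K). tel_proj f p \<in> S}"
  have "{p \<in> topspace (tel_domain K). tel_proj f p \<in> \<Union>\<K>} =
     (\<Union>S\<in>\<K>. {p \<in> topspace (tel_domain K). tel_proj f p \<in> S})" by auto
  with H show "\<Union>\<K> \<subseteq> tel_proj f ` topspace (tel_domain K) \<and>
           openin (tel_domain K) {p \<in> topspace (tel_domain K). tel_proj f p \<in> \<Union>\<K>}"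
    by auto
qed

lemma openin_Tel: "openin (Tel K f) U \<longleftrightarrow> U \<subseteq> tel_proj f ` topspace (tel_domain K) \<and>
                 openin (tel_domain K) {p \<in> topspace (tel_domain K). tel_proj f p \<in> U}"
  unfolding Tel_def using tel_istop[of f K] by simp

lemma topspace_Tel: "topspace (Tel K f) = tel_proj f ` topspace (tel_domain K)"
proof
  show "topspace (Tel K f) \<subseteq> tel_proj f ` topspace (tel_domain K)"
    unfolding topspace_def openin_Tel by auto
  have "openin (Tel K f) (tel_proj f ` topspace (tel_domain K))"
    unfolding openin_Tel
  proof
    show "openin (tel_domain K) {p \<in> topspace (tel_domain K). tel_proj f p \<in> tel_proj f ` topspace (tel_domain K)}"
      by (metis (no_types, lifting) image_eqI mem_Collect_eq openin_topspace subsetI subset_antisym)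
  qed simp
  then show "tel_proj f ` topspace (tel_domain K) \<subseteq> topspace (Tel K f)"
    by (simp add: openin_subset)
qed

lemma quotient_tel: "quotient_map (tel_domain K) (Tel K f) (tel_proj f)"
  unfolding quotient_map_def topspace_Tel
  by (auto simp: openin_Tel)

lemma cont_tel_proj: "continuous_map (tel_domain K) (Tel K f) (tel_proj f)"
  using quotient_imp_continuous_map quotient_tel by blast

lemma topspace_tel_domain: "topspace (tel_domain K) = UNIV \<times> topspace K \<times> {0..1}"
  by (simp add: tel_domain_def)

lemma topspace_Tel_char:
  assumes "continuous_map K K f"
  shows "topspace (Tel K f) = UNIV \<times> topspace K \<times> {0..<1}"
proof -
  have fK: "x \<in> topspace K \<Longrightarrow> f x \<in> topspace K" for x
    using assms continuous_map_image_subset_topspace by blast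
  show ?thesis
    unfolding topspace_Tel topspace_tel_domain
  proof (intro subset_antisym subsetI)
    fix p :: "int \<times> 'a \<times> real" assume "p \<in> tel_proj f ` (UNIV \<times> topspace K \<times> {0..1})"
    then obtain n x t where "x \<in> topspace K" "t \<in> {0..1}" "p = tel_proj f (n,x,t)" by auto
    then show "p \<in> UNIV \<times> topspace K \<times> {0..<1}"
      by (auto simp: tel_proj_def fK)
  next
    fix p :: "int \<times> 'a \<times> real" assume "p \<in> UNIV \<times> topspace K \<times> {0..<1}"
    then obtain n::int and x t where "x \<in> topspace K" "t \<in> {0..<1}" "p = (n,x,t)" by auto
    then have "p = tel_proj f (n,x,t)" by (simp add: tel_proj_def)
    then show "p \<in> tel_proj f ` (UNIV \<times> topspace K \<times> {0..1})"
      using \<open>x \<in> topspace K\<close> \<open>t \<in> {0..<1}\<close> by force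
  qed
qed


definition flw :: "('a\<Rightarrow>'a) \<Rightarrow> real \<Rightarrow> int\<times>'a\<times>real \<Rightarrow> int\<times>'a\<times>real" where
 "flw f a p = (case p of (n,x,t) \<Rightarrow> (n + \<lfloor>t+a\<rfloor>, (f ^^ nat \<lfloor>t+a\<rfloor>) x, t + a - of_int \<lfloor>t+a\<rfloor>))"

lemma cont_funpow: "continuous_map K K f \<Longrightarrow> continuous_map K K (f ^^ j)"
  by (induction j) (auto intro: continuous_map_compose)

lemma cont_into_dom:
  assumes "continuous_map X K \<xi>" "continuous_map X euclideanreal \<tau>"
    "\<And>z. z \<in> topspace X \<Longrightarrow> 0 \<le> \<tau> z \<and> \<tau> z \<le> 1"
  shows "continuous_map X (tel_domain K) (\<lambda>z. (n, \<xi> z, \<tau> z))"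
  unfolding tel_domain_def continuous_map_pairwise o_def
  using assms by (auto simp: continuous_map_in_subtopology)

lemma flw_piece:
  assumes "real j \<le> s" "s \<le> real j + 1" "0 \<le> t" "t \<le> s"
  shows "tel_proj f (n + int j, (f^^j) x, s - real j) = flw f (s - t) (n, x, t)"
proof (cases "s = real j + 1")
  case True
  then have "\<lfloor>t + (s - t)\<rfloor> = int j + 1" by simp
  then show ?thesis using True by (simp add: flw_def tel_proj_def nat_add_distrib)
next
  case False
  then have "\<lfloor>t + (s - t)\<rfloor> = int j" using assms by (simp add: floor_eq_iff)
  then show ?thesis using False assms by (simp add: flw_def tel_proj_def)
qed

lemma flow_cont:
  assumes fc: "continuous_map K K f"
    and xi: "continuous_map X K \<xi>" and tau: "continuous_map X euclideanreal \<tau>"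
    and al: "continuous_map X euclideanreal \<alpha>"
    and rng: "\<And>z. z \<in> topspace X \<Longrightarrow> 0 \<le> \<tau> z \<and> \<tau> z \<le> 1 \<and> 0 \<le> \<alpha> z \<and> \<tau> z + \<alpha> z \<le> real M"
  shows "continuous_map X (Tel K f) (\<lambda>z. flw f (\<alpha> z) (n, \<xi> z, \<tau> z))"
proof (rule pasting_lemma_closed[where I="{0..M}" and
       T="\<lambda>j. {z \<in> topspace X. \<tau> z + \<alpha> z \<in> {real j..real j + 1}}" and
       f="\<lambda>j z. tel_proj f (n + int j, (f^^j) (\<xi> z), \<tau> z + \<alpha> z - real j)"])
  have sc: "continuous_map X euclideanreal (\<lambda>z. \<tau> z + \<alpha> z)"
    using tau al by (intro continuous_intros)
  show "closedin X {z \<in> topspace X. \<tau> z + \<alpha> z \<in> {real j..real j + 1}}" for j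
    by (rule closedin_continuous_map_preimage[OF sc]) simp
  show "continuous_map (subtopology X {z \<in> topspace X. \<tau> z + \<alpha> z \<in> {real j..real j + 1}})
          (Tel K f) (\<lambda>z. tel_proj f (n + int j, (f^^j) (\<xi> z), \<tau> z + \<alpha> z - real j))" for j
  proof (rule continuous_map_compose[OF _ cont_tel_proj, unfolded o_def])
    show "continuous_map (subtopology X {z \<in> topspace X. \<tau> z + \<alpha> z \<in> {real j..real j + 1}})
        (tel_domain K) (\<lambda>z. (n + int j, (f^^j) (\<xi> z), \<tau> z + \<alpha> z - real j))"
    proof (rule cont_into_dom)
      show "continuous_map (subtopology X {z \<in> topspace X. \<tau> z + \<alpha> z \<in> {real j..real j + 1}}) K
          (\<lambda>z. (f ^^ j) (\<xi> z))"
        using continuous_map_compose[OF xi cont_funpow[OF fc]]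
        by (simp add: o_def continuous_map_from_subtopology)
      show "continuous_map (subtopology X {z \<in> topspace X. \<tau> z + \<alpha> z \<in> {real j..real j + 1}})
          euclideanreal (\<lambda>z. \<tau> z + \<alpha> z - real j)"
        using tau al by (intro continuous_intros continuous_map_from_subtopology) auto
    qed auto
  qed
  show "tel_proj f (n + int i, (f ^^ i) (\<xi> x), \<tau> x + \<alpha> x - real i) =
        tel_proj f (n + int j, (f ^^ j) (\<xi> x), \<tau> x + \<alpha> x - real j)"
    if "i \<in> {0..M}" "j \<in> {0..M}" "x \<in> topspace X \<inter> {z \<in> topspace X. \<tau> z + \<alpha> z \<in> {real i..real i + 1}} \<inter>
          {z \<in> topspace X. \<tau> z + \<alpha> z \<in> {real j..real j + 1}}" for i j x
    using that rng[of x] flw_piece[of i "\<tau> x + \<alpha> x" "\<tau> x" f n "\<xi> x"]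
        flw_piece[of j "\<tau> x + \<alpha> x" "\<tau> x" f n "\<xi> x"] by auto
  show "\<exists>j. j \<in> {0..M} \<and> x \<in> {z \<in> topspace X. \<tau> z + \<alpha> z \<in> {real j..real j + 1}} \<and>
         flw f (\<alpha> x) (n, \<xi> x, \<tau> x) = tel_proj f (n + int j, (f ^^ j) (\<xi> x), \<tau> x + \<alpha> x - real j)"
    if "x \<in> topspace X" for x
  proof -
    define j where "j = nat \<lfloor>\<tau> x + \<alpha> x\<rfloor>"
    have r: "0 \<le> \<tau> x + \<alpha> x" "\<tau> x + \<alpha> x \<le> real M" using rng[OF that] by auto
    then have j: "real j \<le> \<tau> x + \<alpha> x" "\<tau> x + \<alpha> x \<le> real j + 1" "j \<le> M"
      unfolding j_def by (auto simp: nat_le_iff floor_le_iff)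
    show ?thesis
      using j that rng[OF that] flw_piece[of j "\<tau> x + \<alpha> x" "\<tau> x" f n "\<xi> x"]
      by (intro exI[of _ j]) auto
  qed
qed simp


lemma mk_htpy:
  assumes "continuous_map (prod_topology (top_of_set {0..1::real}) X) Y k"
    "\<And>x. x \<in> topspace X \<Longrightarrow> k (0, x) = p x" "\<And>x. x \<in> topspace X \<Longrightarrow> k (1, x) = q x"
  shows "homotopic_with (\<lambda>_. True) X Y p q"
proof -
  have "homotopic_with (\<lambda>_. True) X Y (k \<circ> Pair 0) (k \<circ> Pair 1)"
    unfolding homotopic_with_def by (rule exI[of _ k]) (simp add: assms(1))
  then show ?thesis
    by (rule homotopic_with_eq) (auto simp: assms)
qed

lemma lc01: "locally_compact_space (top_of_set {0..1::real})"
  by (simp add: compact_imp_locally_compact_space compact_space_subtopology compactin_subtopology)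

lemma quot_prod_tel: "quotient_map (prod_topology (top_of_set {0..1::real}) (tel_domain K))
    (prod_topology (top_of_set {0..1}) (Tel K f)) (\<lambda>(s,p). (s, tel_proj f p))"
  using quotient_map_prod_right[OF lc01 _ quotient_tel] by (simp add: Hausdorff_space_subtopology)

definition lev :: "int\<times>'a\<times>real \<Rightarrow> real" where
  "lev p = real_of_int (fst p) + snd (snd p)"

lemma cont_lev: "continuous_map (Tel K f) euclideanreal lev"
proof -
  have "continuous_map (tel_domain K) euclideanreal (lev \<circ> tel_proj f)"
  proof (rule continuous_map_eq)
    show "continuous_map (tel_domain K) euclideanreal (\<lambda>p. real_of_int (fst p) + snd (snd p))"
      unfolding tel_domain_def
    proof (intro continuous_intros)
      show "continuous_map (prod_topology (discrete_topology UNIV) (prod_topology K (top_of_set {0..1})))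
         euclideanreal (\<lambda>x. real_of_int (fst x))"
      proof -
        have "continuous_map (discrete_topology (UNIV::int set)) euclideanreal real_of_int" by simp
        then show ?thesis using continuous_map_compose[OF continuous_map_fst]
          by (metis (no_types, lifting) comp_def continuous_map_eq)
      qed
      show "continuous_map (prod_topology (discrete_topology UNIV) (prod_topology K (top_of_set {0..1})))
         euclideanreal (\<lambda>x. snd (snd x))"
        using continuous_map_into_fulltopology[OF continuous_map_compose[OF continuous_map_snd continuous_map_snd]]
        by (simp add: o_def)
    qed
    show "real_of_int (fst x) + snd (snd x) = (lev \<circ> tel_proj f) x" for x
      by (cases x) (auto simp: lev_def tel_proj_def)
  qed
  then show ?thesis using continuous_compose_quotient_map_eq[OF quotient_tel] by blast
qed


lemma flw_tel_proj:
  assumes "0 \<le> a"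
  shows "flw f a (tel_proj f (n,x,t)) = flw f a (n,x,t)"
proof (cases "t = 1")
  case True
  have "\<lfloor>1 + a\<rfloor> = 1 + \<lfloor>a\<rfloor>" by simp
  moreover have "nat (1 + \<lfloor>a\<rfloor>) = Suc (nat \<lfloor>a\<rfloor>)" using assms by (simp add: nat_add_distrib)
  ultimately show ?thesis using True
    by (simp add: flw_def tel_proj_def funpow_Suc_right del: funpow.simps)
next
  case False
  then show ?thesis by (simp add: tel_proj_def)
qed

lemma lev_tel_proj: "lev (tel_proj f (n,x,t)) = real_of_int n + t"
  by (auto simp: lev_def tel_proj_def)

lemma cont_Fl:
  assumes fc: "continuous_map K K f"
  shows "continuous_map (prod_topology (top_of_set {0..1::real}) (Tel K f)) (Tel K f)
           (\<lambda>(s,p). flw f (s * max 0 (real_of_int c - lev p)) p)"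
proof -
  let ?X = "prod_topology (top_of_set {0..1::real}) (tel_domain K)"
  let ?g = "\<lambda>(s::real,(n::int,x,t::real)). flw f (s * max 0 (real_of_int c - (real_of_int n + t))) (n,x,t)"
  have "continuous_map ?X (Tel K f) ?g"
  proof (rule pasting_lemma[where I=UNIV and T="\<lambda>n. {z \<in> topspace ?X. fst (snd z) = n}"
      and f="\<lambda>n z. flw f (fst z * max 0 (real_of_int c - (real_of_int n + snd (snd (snd z)))))
                     (n, fst (snd (snd z)), snd (snd (snd z)))"])
    have c1: "continuous_map ?X (discrete_topology UNIV) (\<lambda>z. fst (snd z))"
      unfolding tel_domain_def
      using continuous_map_compose[OF continuous_map_snd continuous_map_fst] by (simp add: o_def)
    show "openin ?X {z \<in> topspace ?X. fst (snd z) = n}" for n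
      using openin_continuous_map_preimage[OF c1, of "{n}"] by simp
    show "continuous_map (subtopology ?X {z \<in> topspace ?X. fst (snd z) = n}) (Tel K f)
       (\<lambda>z. flw f (fst z * max 0 (real_of_int c - (real_of_int n + snd (snd (snd z)))))
                     (n, fst (snd (snd z)), snd (snd (snd z))))" for n
    proof (rule flow_cont[OF fc, where M="nat (c - n) + 1"])
      let ?S = "subtopology ?X {z \<in> topspace ?X. fst (snd z) = n}"
      have cs: "continuous_map ?S ?X id" by (simp add: continuous_map_from_subtopology)
      have cx: "continuous_map ?X K (\<lambda>z. fst (snd (snd z)))"
        unfolding tel_domain_def
        using continuous_map_compose[OF continuous_map_snd
              continuous_map_compose[OF continuous_map_snd continuous_map_fst]]
        by (simp add: o_def)
      show "continuous_map ?S K (\<lambda>z. fst (snd (snd z)))"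
        using continuous_map_compose[OF cs cx] by (simp add: o_def)
      have ct: "continuous_map ?X euclideanreal (\<lambda>z. snd (snd (snd z)))"
        unfolding tel_domain_def
        using continuous_map_into_fulltopology[OF continuous_map_compose[OF continuous_map_snd
              continuous_map_compose[OF continuous_map_snd continuous_map_snd]]]
        by (simp add: o_def)
      show ct': "continuous_map ?S euclideanreal (\<lambda>z. snd (snd (snd z)))"
        using continuous_map_compose[OF cs ct] by (simp add: o_def)
      have cf: "continuous_map ?X euclideanreal fst"
        using continuous_map_into_fulltopology[OF continuous_map_fst] by blast
      have cf': "continuous_map ?S euclideanreal fst"
        using continuous_map_compose[OF cs cf] by (simp add: o_def)
      show "continuous_map ?S euclideanreal
          (\<lambda>z. fst z * max 0 (real_of_int c - (real_of_int n + snd (snd (snd z)))))"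
        using cf' ct' by (intro continuous_intros) auto
      fix z assume "z \<in> topspace ?S"
      then have z: "0 \<le> fst z" "fst z \<le> 1" "0 \<le> snd (snd (snd z))" "snd (snd (snd z)) \<le> 1"
        by (auto simp: tel_domain_def)
      let ?t = "snd (snd (snd z))" and ?s = "fst z"
      have "?s * max 0 (real_of_int c - (real_of_int n + ?t)) \<le> max 0 (real_of_int c - (real_of_int n + ?t))"
        using z by (simp add: mult_left_le_one_le)
      moreover have "real (nat (c - n) + 1) \<ge> real_of_int (c - n) + 1" by simp
      ultimately show "0 \<le> ?t \<and> ?t \<le> 1 \<and> 0 \<le> ?s * max 0 (real_of_int c - (real_of_int n + ?t)) \<and>
          ?t + ?s * max 0 (real_of_int c - (real_of_int n + ?t)) \<le> real (nat (c - n) + 1)"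
        using z by (auto simp: max_def split: if_splits)
    qed
    show "\<exists>j. j \<in> UNIV \<and> x \<in> {z \<in> topspace ?X. fst (snd z) = j} \<and> ?g x =
         flw f (fst x * max 0 (real_of_int c - (real_of_int j + snd (snd (snd x)))))
           (j, fst (snd (snd x)), snd (snd (snd x)))" if "x \<in> topspace ?X" for x
      using that by (cases x) auto
  qed auto
  then have "continuous_map ?X (Tel K f)
     ((\<lambda>(s,p). flw f (s * max 0 (real_of_int c - lev p)) p) \<circ> (\<lambda>(s,p). (s, tel_proj f p)))"
  proof (rule continuous_map_eq)
    fix z assume "z \<in> topspace ?X"
    then obtain s n x t where z: "z = (s,n,x,t)" "0 \<le> s" "s \<le> 1" "t \<in> {0..1}"
      by (cases z) (auto simp: tel_domain_def)
    have "0 \<le> s * max 0 (real_of_int c - (real_of_int n + t))" using z by simp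
    then show "?g z = ((\<lambda>(s,p). flw f (s * max 0 (real_of_int c - lev p)) p) \<circ> (\<lambda>(s,p). (s, tel_proj f p))) z"
      using z by (simp add: lev_tel_proj flw_tel_proj)
  qed
  then show ?thesis
    using continuous_compose_quotient_map_eq[OF quot_prod_tel] by blast
qed


lemma funpow_in: "continuous_map K K f \<Longrightarrow> x \<in> topspace K \<Longrightarrow> (f^^j) x \<in> topspace K"
  using cont_funpow continuous_map_image_subset_topspace by fastforce

lemma cont_u:
  assumes fc: "continuous_map K K f"
    and H_cont: "continuous_map (prod_topology K (top_of_set {0..1})) K H"
    and H0: "\<And>x. x \<in> topspace K \<Longrightarrow> H (x, 0) = f x"
    and H1: "\<And>x. x \<in> topspace K \<Longrightarrow> H (x, 1) = f (f x)"
  shows "continuous_map (Tel K f) K (tel_u H)"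
proof -
  have "continuous_map (tel_domain K) K (tel_u H \<circ> tel_proj f)"
  proof (rule continuous_map_eq)
    show "continuous_map (tel_domain K) K (H \<circ> snd)"
      unfolding tel_domain_def using H_cont by (rule continuous_map_compose[OF continuous_map_snd])
    fix p assume "p \<in> topspace (tel_domain K)"
    then obtain n x t where p: "p = (n,x,t)" "x \<in> topspace K" "t \<in> {0..1}"
      by (cases p) (auto simp: tel_domain_def)
    have fx: "f x \<in> topspace K" using fc p(2) continuous_map_image_subset_topspace by fastforce
    show "(H \<circ> snd) p = (tel_u H \<circ> tel_proj f) p"
      using p H0[OF fx] H1[OF p(2)] by (auto simp: tel_u_def tel_proj_def)
  qed
  then show ?thesis using continuous_compose_quotient_map_eq[OF quotient_tel] by blast
qed

lemma cont_i:
  shows "continuous_map K (Tel K f) (\<lambda>y. (m, y, 0))"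
proof -
  have "continuous_map K (Tel K f) (tel_proj f \<circ> (\<lambda>y. (m, y, 0)))"
    by (rule continuous_map_compose[OF cont_into_dom cont_tel_proj]) auto
  then show ?thesis by (simp add: o_def tel_proj_def)
qed

lemma compact_disc: "compact_space (disc n)"
proof -
  define B where "B = PiE UNIV (\<lambda>i::nat. if i < n then {-1..1::real} else {0})"
  define S where "S = {x::nat\<Rightarrow>real. (\<forall>i\<ge>n. x i = 0) \<and> (\<Sum>i<n. (x i)^2) \<le> 1}"
  have dS: "disc n = subtopology (powertop_real UNIV) S"
    by (simp add: disc_def Euclidean_space_def subtopology_subtopology S_def Collect_conj_eq)
  have cB: "compactin (powertop_real UNIV) B"
    unfolding B_def by (simp add: compactin_PiE compactin_euclidean_iff)
  have SB: "S \<subseteq> B"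
  proof
    fix x assume "x \<in> S"
    then have x: "\<forall>i\<ge>n. x i = 0" "(\<Sum>i<n. (x i)^2) \<le> 1" by (auto simp: S_def)
    have "\<bar>x i\<bar> \<le> 1" if "i < n" for i
    proof -
      have "(x i)^2 \<le> (\<Sum>i<n. (x i)^2)"
        using that by (intro member_le_sum) auto
      then have "(x i)^2 \<le> 1^2" using x by simp
      then show ?thesis by (metis abs_le_square_iff abs_one)
    qed
    then show "x \<in> B" using x by (auto simp: B_def abs_le_iff not_less)
  qed
  have cS: "closedin (powertop_real UNIV) S"
  proof -
    have c1: "closedin (powertop_real UNIV) {x. x i = 0}" for i
    proof -
      have "continuous_map (powertop_real UNIV) euclideanreal (\<lambda>x. x i)"
        by (rule continuous_map_product_projection) simp
      from closedin_continuous_map_preimage[OF this, of "{0}"] show ?thesis by simp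
    qed
    have "continuous_map (powertop_real UNIV) euclideanreal (\<lambda>x. \<Sum>i<n. (x i)^2)"
      by (intro continuous_intros continuous_map_product_projection) auto
    from closedin_continuous_map_preimage[OF this, of "{..1}"]
    have c2: "closedin (powertop_real UNIV) {x. (\<Sum>i<n. (x i)^2) \<le> 1}"
      by simp
    have "S = (\<Inter>i\<in>{n..}. {x. x i = 0}) \<inter> {x. (\<Sum>i<n. (x i)^2) \<le> 1}"
      by (auto simp: S_def)
    then show ?thesis
      using c1 c2 by (auto intro!: closedin_Int closedin_Inter)
  qed
  have "compactin (powertop_real UNIV) S"
    using closed_compactin[OF cB SB cS] .
  then show ?thesis by (simp add: dS compact_space_subtopology)
qed

lemma finite_cw_compact:
  assumes "finite_cw_complex L"
  shows "compact_space L"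
proof -
  obtain I :: "nat set" and cdim \<Phi> where I: "finite I" "cw_structure L I cdim \<Phi>"
    using assms unfolding finite_cw_complex_def by blast
  have ct: "continuous_map (disc (cdim i)) L (\<Phi> i)" if "i \<in> I" for i
    using I(2) that by (auto simp: cw_structure_def)
  have "topspace L = (\<Union>i\<in>I. open_cell cdim \<Phi> i)"
    using I(2) by (auto simp: cw_structure_def)
  also have "\<dots> \<subseteq> (\<Union>i\<in>I. closed_cell cdim \<Phi> i)"
    unfolding open_cell_def closed_cell_def disc_interior_def disc_def
    by (auto simp: topspace_Euclidean_space)
  finally have sub: "topspace L \<subseteq> (\<Union>i\<in>I. closed_cell cdim \<Phi> i)" .
  have sub2: "(\<Union>i\<in>I. closed_cell cdim \<Phi> i) \<subseteq> topspace L"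
    unfolding closed_cell_def using ct continuous_map_image_subset_topspace by blast
  have "compactin L (closed_cell cdim \<Phi> i)" if "i \<in> I" for i
    unfolding closed_cell_def
    using image_compactin[OF _ ct[OF that]] compact_disc[of "cdim i"]
    by (simp add: compact_space_def)
  then have "compactin L (\<Union>i\<in>I. closed_cell cdim \<Phi> i)"
    using I(1) by (intro compactin_Union) auto
  then show ?thesis
    using sub sub2 unfolding compact_space_def by (metis subset_antisym)
qed


lemma flw_zero: "0 \<le> t \<Longrightarrow> t < 1 \<Longrightarrow> flw f 0 (n,x,t) = (n,x,t)"
  by (simp add: flw_def floor_eq_iff)

lemma R_val:
  assumes "real_of_int n + t \<le> real_of_int c" "0 \<le> t"
  shows "flw f (max 0 (real_of_int c - lev (n,x,t))) (n,x,t) = (c, (f^^nat(c-n)) x, 0)"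
proof -
  have m: "max 0 (real_of_int c - lev (n,x,t)) = real_of_int c - (real_of_int n + t)"
    using assms by (simp add: lev_def)
  have "t + (real_of_int c - (real_of_int n + t)) = real_of_int (c - n)" by simp
  then show ?thesis unfolding m flw_def by simp
qed

lemma iter_htpy:
  assumes fc: "continuous_map K K f"
    and H_cont: "continuous_map (prod_topology K (top_of_set {0..1::real})) K H"
    and H0: "\<And>x. x \<in> topspace K \<Longrightarrow> H (x, 0) = f x"
    and H1: "\<And>x. x \<in> topspace K \<Longrightarrow> H (x, 1) = f (f x)"
    and g: "continuous_map L K g"
  shows "homotopic_with (\<lambda>_. True) L K (\<lambda>l. (f^^k) (f (g l))) (\<lambda>l. f (g l))"
proof (induction k)
  case 0
  show ?case using continuous_map_compose[OF g fc]
    by (simp add: o_def homotopic_with_refl)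
next
  case (Suc k)
  have gin: "g l \<in> topspace K" if "l \<in> topspace L" for l
    using g that continuous_map_image_subset_topspace by fastforce
  have "homotopic_with (\<lambda>_. True) L K (\<lambda>l. (f^^Suc k) (f (g l))) (\<lambda>l. (f^^k) (f (g l)))"
  proof (rule mk_htpy[where k="\<lambda>(s,l). (f^^k) (H (g l, 1 - s))"])
    have "continuous_map (prod_topology (top_of_set {0..1::real}) L) (prod_topology K (top_of_set {0..1}))
        (\<lambda>(s,l). (g l, 1 - s))"
      unfolding case_prod_unfold continuous_map_paired
    proof
      show "continuous_map (prod_topology (top_of_set {0..1::real}) L) K (\<lambda>x. g (snd x))"
        using continuous_map_compose[OF continuous_map_snd g] by (simp add: o_def)
      have "continuous_map (prod_topology (top_of_set {0..1::real}) L) euclideanreal (\<lambda>x. 1 - fst x)"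
        by (intro continuous_intros continuous_map_into_fulltopology[OF continuous_map_fst])
      then show "continuous_map (prod_topology (top_of_set {0..1::real}) L) (top_of_set {0..1})
          (\<lambda>x. 1 - fst x)"
        by (auto simp: continuous_map_in_subtopology)
    qed
    then show "continuous_map (prod_topology (top_of_set {0..1::real}) L) K (\<lambda>(s,l). (f^^k) (H (g l, 1 - s)))"
      using continuous_map_compose[OF continuous_map_compose[OF _ H_cont] cont_funpow[OF fc, of k]]
      by (simp add: o_def case_prod_unfold)
    show "(\<lambda>(s,l). (f^^k) (H (g l, 1 - s))) (0, x) = (f^^Suc k) (f (g x))" if "x \<in> topspace L" for x
      using H1[OF gin[OF that]] by (simp add: funpow_Suc_right del: funpow.simps)
    show "(\<lambda>(s,l). (f^^k) (H (g l, 1 - s))) (1, x) = (f^^k) (f (g x))" if "x \<in> topspace L" for x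
      using H0[OF gin[OF that]] by simp
  qed
  then show ?case using Suc.IH homotopic_with_trans by blast
qed

lemma htpy_Fl:
  assumes fc: "continuous_map K K f" and hc: "continuous_map L (Tel K f) h"
  shows "homotopic_with (\<lambda>_. True) L (Tel K f) h
           (\<lambda>l. flw f (max 0 (real_of_int c - lev (h l))) (h l))"
proof (rule mk_htpy[where k="(\<lambda>(s,p). flw f (s * max 0 (real_of_int c - lev p)) p) \<circ> (\<lambda>(s,l). (s, h l))"])
  have "continuous_map (prod_topology (top_of_set {0..1::real}) L) (prod_topology (top_of_set {0..1::real}) (Tel K f))
      (\<lambda>(s,l). (s, h l))"
    unfolding continuous_map_pairwise case_prod_unfold
    using continuous_map_compose[OF continuous_map_snd hc] continuous_map_fst by (auto simp: o_def)
  then show "continuous_map (prod_topology (top_of_set {0..1::real}) L) (Tel K f)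
     ((\<lambda>(s,p). flw f (s * max 0 (real_of_int c - lev p)) p) \<circ> (\<lambda>(s,l). (s, h l)))"
    using cont_Fl[OF fc] by (rule continuous_map_compose)
  fix x assume "x \<in> topspace L"
  then have "h x \<in> topspace (Tel K f)" using hc continuous_map_image_subset_topspace by fastforce
  then obtain n y t where "h x = (n,y,t)" "0 \<le> t" "t < 1"
    by (auto simp: topspace_Tel_char[OF fc])
  then show "((\<lambda>(s,p). flw f (s * max 0 (real_of_int c - lev p)) p) \<circ> (\<lambda>(s,l). (s, h l))) (0, x) = h x"
    by (simp add: flw_zero)
  show "((\<lambda>(s,p). flw f (s * max 0 (real_of_int c - lev p)) p) \<circ> (\<lambda>(s,l). (s, h l))) (1, x) =
          flw f (max 0 (real_of_int c - lev (h x))) (h x)" by simp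
qed


theorem lemma2p6:
  fixes K :: "'a topology" and I :: "'i set" and cdim :: "'i \<Rightarrow> nat"
    and \<Phi> :: "'i \<Rightarrow> (nat \<Rightarrow> real) \<Rightarrow> 'a"
    and f :: "'a \<Rightarrow> 'a" and k0 :: 'a and H :: "'a \<times> real \<Rightarrow> 'a"
  assumes cw: "cw_structure K I cdim \<Phi>"
    and conn: "connected_space K"
    and base: "\<exists>i\<in>I. cdim i = 0 \<and> closed_cell cdim \<Phi> i = {k0}"
    and f_cont: "continuous_map K K f"
    and f_pointed: "f k0 = k0"
    and f_cell: "cellular_map I cdim \<Phi> f"
    and H_cont: "continuous_map (prod_topology K (top_of_set {0..1})) K H"
    and H0: "\<And>x. x \<in> topspace K \<Longrightarrow> H (x, 0) = f x"
    and H1: "\<And>x. x \<in> topspace K \<Longrightarrow> H (x, 1) = f (f x)"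
  shows "\<forall>(L :: 'b topology) h. finite_cw_complex L \<and> continuous_map L (Tel K f) h \<longrightarrow>
           homotopic_with (\<lambda>_. True) L (Tel K f) (tel_d f \<circ> tel_u H \<circ> h) h"
proof (intro allI impI, elim conjE)
  fix L :: "'b topology" and h
  assume fin: "finite_cw_complex L" and hc: "continuous_map L (Tel K f) h"
  have cL: "compact_space L" using finite_cw_compact[OF fin] .
  have clh: "continuous_map L euclideanreal (lev \<circ> h)"
    using continuous_map_compose[OF hc cont_lev] .
  have "compactin euclideanreal ((lev \<circ> h) ` topspace L)"
    using image_compactin[OF _ clh] cL by (simp add: compact_space_def)
  then have "bounded ((lev \<circ> h) ` topspace L)"
    by (simp add: compactin_euclidean_iff compact_imp_bounded)
  then obtain B where B: "\<And>l. l \<in> topspace L \<Longrightarrow> lev (h l) \<le> B"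
    using bounded_imp_bdd_above unfolding bdd_above_def by fastforce
  define c where "c = max 0 \<lceil>B\<rceil>"
  have c0: "0 \<le> c" by (simp add: c_def)
  have cB: "lev (h l) \<le> real_of_int c" if "l \<in> topspace L" for l
    using B[OF that] unfolding c_def by linarith
  have hin: "\<exists>n x t. h l = (n,x,t) \<and> x \<in> topspace K \<and> 0 \<le> t \<and> t < 1 \<and> real_of_int n + t \<le> real_of_int c"
    if "l \<in> topspace L" for l
  proof -
    have "h l \<in> topspace (Tel K f)" using hc that continuous_map_image_subset_topspace by fastforce
    then obtain n x t where "h l = (n,x,t)" "x \<in> topspace K" "0 \<le> t" "t < 1"
      by (auto simp: topspace_Tel_char[OF f_cont])
    then show ?thesis using cB[OF that] by (auto simp: lev_def)
  qed
  have cu: "continuous_map (Tel K f) K (tel_u H)"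
    using cont_u[OF f_cont H_cont H0 H1] .
  define g where "g = (\<lambda>l. tel_u H (flw f (max 0 (real_of_int c - lev (h l))) (h l)))"
  have hA0: "homotopic_with (\<lambda>_. True) L (Tel K f) h (\<lambda>l. flw f (max 0 (real_of_int c - lev (h l))) (h l))"
    using htpy_Fl[OF f_cont hc] .
  have cg: "continuous_map L K g"
    unfolding g_def
    using continuous_map_compose[OF conjunct2[OF homotopic_with_imp_continuous_maps[OF hA0]] cu]
    by (simp add: o_def)
  have gval: "g l = f ((f^^nat(c-n)) x)" if "l \<in> topspace L" "h l = (n,x,t)" "x \<in> topspace K" "0 \<le> t"
     "real_of_int n + t \<le> real_of_int c" for l n x t
    using that R_val[of n t c f x] H0[OF funpow_in[OF f_cont that(3)]] by (simp add: tel_u_def g_def)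
  have hA: "homotopic_with (\<lambda>_. True) L (Tel K f) h (\<lambda>l. (c+2, f (g l), 0))"
  proof (rule homotopic_with_eq[OF htpy_Fl[OF f_cont hc, of "c+2"]])
    fix l assume l: "l \<in> topspace L"
    then obtain n x t where nxt: "h l = (n,x,t)" "x \<in> topspace K" "0 \<le> t" "t < 1"
        "real_of_int n + t \<le> real_of_int c"
      using hin by blast
    have "nat (c + 2 - n) = Suc (Suc (nat (c - n)))" using nxt c0 by linarith
    then show "(c+2, f (g l), 0) = flw f (max 0 (real_of_int (c+2) - lev (h l))) (h l)"
      using nxt gval[OF l nxt(1,2,3,5)] R_val[of n t "c+2" f x] by simp
  qed auto
  have cdu: "continuous_map (Tel K f) (Tel K f) (tel_d f \<circ> tel_u H)"
  proof -
    have "continuous_map K (Tel K f) (tel_d f)"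
      using continuous_map_compose[OF f_cont cont_i[where K=K and f=f and m=0]] by (simp add: o_def tel_d_def[abs_def])
    then show ?thesis using continuous_map_compose[OF cu] by blast
  qed
  have hB: "homotopic_with (\<lambda>_. True) L (Tel K f) (tel_d f \<circ> tel_u H \<circ> h) (\<lambda>l. (0, f (g l), 0))"
    using homotopic_with_compose_continuous_map_left[OF hA0 cdu]
    by (simp add: o_def g_def tel_d_def)
  have hC: "homotopic_with (\<lambda>_. True) L (Tel K f) (\<lambda>l. (0, f (g l), 0))
        (\<lambda>l. (c+2, (f^^nat(c+2)) (f (g l)), 0))"
  proof (rule mk_htpy[where k="\<lambda>z. flw f (fst z * real_of_int (c+2)) (0, f (g (snd z)), 0)"])
    show "continuous_map (prod_topology (top_of_set {0..1::real}) L) (Tel K f)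
        (\<lambda>z. flw f (fst z * real_of_int (c+2)) (0, f (g (snd z)), 0))"
    proof (rule flow_cont[OF f_cont, where M="nat (c+2)"])
      show "continuous_map (prod_topology (top_of_set {0..1::real}) L) K (\<lambda>z. f (g (snd z)))"
        using continuous_map_compose[OF continuous_map_compose[OF continuous_map_snd cg] f_cont]
        by (simp add: o_def)
      show "continuous_map (prod_topology (top_of_set {0..1::real}) L) euclideanreal (\<lambda>z. fst z * real_of_int (c + 2))"
        by (intro continuous_intros continuous_map_into_fulltopology[OF continuous_map_fst])
      fix z assume "z \<in> topspace (prod_topology (top_of_set {0..1::real}) L)"
      then have "0 \<le> fst z" "fst z \<le> 1" by auto
      then show "0 \<le> (0::real) \<and> (0::real) \<le> 1 \<and> 0 \<le> fst z * real_of_int (c + 2) \<and>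
         0 + fst z * real_of_int (c + 2) \<le> real (nat (c + 2))"
        using c0 by (auto simp: mult_left_le_one_le)
    qed auto
    show "flw f (fst (0::real, l) * real_of_int (c+2)) (0, f (g (snd (0::real, l))), 0) = (0, f (g l), 0)" for l
      by (simp add: flw_def)
    show "flw f (fst (1::real, l) * real_of_int (c+2)) (0, f (g (snd (1::real, l))), 0) =
        (c+2, (f^^nat(c+2)) (f (g l)), 0)" for l
      by (simp add: flw_def)
  qed
  have hD: "homotopic_with (\<lambda>_. True) L (Tel K f) (\<lambda>l. (c+2, (f^^nat(c+2)) (f (g l)), 0))
        (\<lambda>l. (c+2, f (g l), 0))"
    using homotopic_with_compose_continuous_map_left[OF iter_htpy[OF f_cont H_cont H0 H1 cg, of "nat (c+2)"]
        cont_i[where K=K and f=f and m="c+2"]]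
    by (simp add: o_def)
  have "homotopic_with (\<lambda>_. True) L (Tel K f) h (tel_d f \<circ> tel_u H \<circ> h)"
    using hA homotopic_with_symD[OF hD] homotopic_with_symD[OF hC] homotopic_with_symD[OF hB]
    by (meson homotopic_with_trans)
  then show "homotopic_with (\<lambda>_. True) L (Tel K f) (tel_d f \<circ> tel_u H \<circ> h) h"
    by (rule homotopic_with_symD)
qed

end
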